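(* Let $1<p<\infty$. The sequence space $h_p$, with norm $\|x\|_{h_p}=\big(\sum_{k=1}^\infty|k\,\Delta x_k|^p\big)^{1/p}$, has the $AD$ property, i.e. the set $\phi$ of finitely nonzero sequences is dense in $h_p$.
   Context: Sequences are complex sequences $x=(x_k)_{k\ge1}$, and $\Delta x_k=x_k-x_{k+1}$. For $1<p<\infty$, $$h_p=\Big\{x:\ \sum_{k=1}^{\infty}(k|\Delta x_k|)^p<\infty,\ \lim_k x_k=0\Big\}.$$ $\phi$ denotes the set of all sequences with only finitely many nonzero terms. *)

theory Defs
  imports "HOL-Analysis.Analysis"
begin

text \<open>Sequences x = (x_k)_{k>=1} are represented as functions nat => complex,
  where the value at index i represents x_{i+1}. Hence the weight k of the
  paper corresponds to Suc i, and Delta x_k = x_k - x_{k+1} corresponds to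
  x i - x (Suc i).\<close>

definition hp_term :: "real \<Rightarrow> (nat \<Rightarrow> complex) \<Rightarrow> nat \<Rightarrow> real" where
  "hp_term p x i = (real (Suc i) * cmod (x i - x (Suc i))) powr p"

definition hp :: "real \<Rightarrow> (nat \<Rightarrow> complex) set" where
  "hp p = {x. summable (hp_term p x) \<and> x \<longlonglongrightarrow> 0}"

definition hp_norm :: "real \<Rightarrow> (nat \<Rightarrow> complex) \<Rightarrow> real" where
  "hp_norm p x = (\<Sum>i. hp_term p x i) powr (1 / p)"

definition phi :: "(nat \<Rightarrow> complex) set" where
  "phi = {x. finite {i. x i \<noteq> 0}}"

end

theory Submission
  imports Defs
begin

lemma tail_lim:
  fixes f :: "nat \<Rightarrow> real"
  assumes "summable f"
  shows "(\<lambda>N. \<Sum>n. f (n + N)) \<longlonglongrightarrow> 0"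
proof -
  have eq: "(\<lambda>N. \<Sum>n. f (n + N)) = (\<lambda>N. suminf f - sum f {..<N})"
    using suminf_split_initial_segment[OF assms] by (auto simp: algebra_simps)
  have "(\<lambda>N. suminf f - sum f {..<N}) \<longlonglongrightarrow> suminf f - suminf f"
    by (intro tendsto_intros summable_LIMSEQ assms)
  thus ?thesis unfolding eq by simp
qed

theorem corollary2p4:
  fixes p :: real
  assumes "1 < p"
  shows "phi \<subseteq> hp p \<and>
         (\<forall>x\<in>hp p. \<forall>\<epsilon>>0. \<exists>y\<in>phi. hp_norm p (x - y) < \<epsilon>)"
proof
  show "phi \<subseteq> hp p"
  proof
    fix x assume "x \<in> phi"
    then have fin: "finite {i. x i \<noteq> 0}" by (simp add: phi_def)
    then obtain M where M: "\<And>i. x i \<noteq> 0 \<Longrightarrow> i < M"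
      by (metis (mono_tags, lifting) finite_nat_set_iff_bounded mem_Collect_eq)
    have ev: "\<And>i. i \<ge> M \<Longrightarrow> x i = 0" using M by (meson not_le)
    have "\<And>i. i \<ge> M \<Longrightarrow> hp_term p x i = 0"
      using ev assms by (simp add: hp_term_def)
    hence "summable (hp_term p x)"
      by (intro summable_finite[of "{..<M}"]) auto
    moreover have "x \<longlonglongrightarrow> 0"
    proof -
      have "eventually (\<lambda>i. x i = 0) sequentially"
        using ev eventually_sequentially by blast
      thus ?thesis by (simp add: tendsto_eventually)
    qed
    ultimately show "x \<in> hp p" by (simp add: hp_def)
  qed
next
  show "\<forall>x\<in>hp p. \<forall>\<epsilon>>0. \<exists>y\<in>phi. hp_norm p (x - y) < \<epsilon>"
  proof (intro ballI allI impI)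
    fix x :: "nat \<Rightarrow> complex" and \<epsilon> :: real
    assume x: "x \<in> hp p" and e: "\<epsilon> > 0"
    have sx: "summable (hp_term p x)" using x by (simp add: hp_def)
    have nn: "\<And>i. hp_term p x i \<ge> 0" by (simp add: hp_term_def)
    have "eventually (\<lambda>N. (\<Sum>n. hp_term p x (n + N)) < \<epsilon> powr p) sequentially"
      using tail_lim[OF sx] e by (simp add: order_tendstoD(2))
    then obtain N where N: "(\<Sum>n. hp_term p x (n + N)) < \<epsilon> powr p"
      by (auto simp: eventually_sequentially)
    define y where "y = (\<lambda>i. if i < N then x i - x N else 0)"
    have yphi: "y \<in> phi"
    proof -
      have "{i. y i \<noteq> 0} \<subseteq> {..<N}" by (auto simp: y_def split: if_splits)
      thus ?thesis unfolding phi_def using finite_subset by blast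
    qed
    have dif: "\<And>i. (x - y) i = (if i < N then x N else x i)"
      by (simp add: y_def)
    have tm: "\<And>i. hp_term p (x - y) i = (if i < N then 0 else hp_term p x i)"
    proof -
      fix i
      show "hp_term p (x - y) i = (if i < N then 0 else hp_term p x i)"
      proof (cases "i < N")
        case True
        then have "(x - y) i - (x - y) (Suc i) = 0"
          by (simp only: dif) (auto simp: not_less_eq intro: arg_cong[where f=x])
        thus ?thesis using True by (simp add: hp_term_def)
      next
        case False
        thus ?thesis by (simp add: hp_term_def y_def)
      qed
    qed
    have s2: "summable (hp_term p (x - y))"
    proof -
      have "summable (\<lambda>n. hp_term p x (n + N))"
        using sx by (simp add: summable_iff_shift)
      hence "summable (\<lambda>n. hp_term p (x - y) (n + N))"
        by (simp add: tm)
      thus ?thesis by (simp add: summable_iff_shift)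
    qed
    have "(\<Sum>i. hp_term p (x - y) i) = (\<Sum>n. hp_term p (x - y) (n + N)) + sum (hp_term p (x - y)) {..<N}"
      using suminf_split_initial_segment[OF s2] .
    also have "\<dots> = (\<Sum>n. hp_term p x (n + N))"
      by (simp add: tm)
    finally have S: "(\<Sum>i. hp_term p (x - y) i) = (\<Sum>n. hp_term p x (n + N))" .
    have S0: "0 \<le> (\<Sum>n. hp_term p x (n + N))"
      using sx nn by (intro suminf_nonneg) (auto simp: summable_iff_shift)
    have "(\<Sum>n. hp_term p x (n + N)) powr (1/p) < (\<epsilon> powr p) powr (1/p)"
      using N S0 assms by (intro powr_less_mono2) auto
    also have "\<dots> = \<epsilon>" using e assms by (simp add: powr_powr)
    finally have "hp_norm p (x - y) < \<epsilon>" by (simp add: hp_norm_def S)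
    thus "\<exists>y\<in>phi. hp_norm p (x - y) < \<epsilon>" using yphi by blast
  qed
qed

end
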